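(* If $G$ is a graph of order $n$ containing no complete subgraph $K_4$, then $q_n(G)\le 4n/9$, where $q_n(G)$ is the smallest eigenvalue of the signless Laplacian of $G$.
   Context: Graphs are finite and simple. For a graph $G$ with adjacency matrix $A$ and diagonal degree matrix $D$, the signless Laplacian is $Q(G)=D+A$; $q_n(G)$ is its smallest eigenvalue. *)

theory Defs
  imports "HOL-Analysis.Analysis"
begin

text \<open>A finite simple graph on the vertex type 'n (order n = CARD('n)),
  given by a symmetric irreflexive adjacency relation.\<close>
definition simple_graph :: "('n::finite \<Rightarrow> 'n \<Rightarrow> bool) \<Rightarrow> bool" where
  "simple_graph E \<longleftrightarrow> (\<forall>u v. E u v \<longleftrightarrow> E v u) \<and> (\<forall>v. \<not> E v v)"

definition adj_matrix :: "('n::finite \<Rightarrow> 'n \<Rightarrow> bool) \<Rightarrow> real^'n^'n" where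
  "adj_matrix E = (\<chi> i j. if E i j then 1 else 0)"

definition degree :: "('n::finite \<Rightarrow> 'n \<Rightarrow> bool) \<Rightarrow> 'n \<Rightarrow> nat" where
  "degree E v = card {u. E v u}"

definition degree_matrix :: "('n::finite \<Rightarrow> 'n \<Rightarrow> bool) \<Rightarrow> real^'n^'n" where
  "degree_matrix E = (\<chi> i j. if i = j then real (degree E i) else 0)"

definition signless_laplacian :: "('n::finite \<Rightarrow> 'n \<Rightarrow> bool) \<Rightarrow> real^'n^'n" where
  "signless_laplacian E = degree_matrix E + adj_matrix E"

definition is_eigenvalue :: "real^'n^'n \<Rightarrow> real \<Rightarrow> bool" where
  "is_eigenvalue M l \<longleftrightarrow> (\<exists>x. x \<noteq> 0 \<and> M *v x = l *\<^sub>R x)"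

text \<open>q_n(G): the smallest eigenvalue of Q(G) (real symmetric, so all eigenvalues are real).\<close>
definition q_min :: "('n::finite \<Rightarrow> 'n \<Rightarrow> bool) \<Rightarrow> real" where
  "q_min E = Min {l. is_eigenvalue (signless_laplacian E) l}"

definition K4_free :: "('n \<Rightarrow> 'n \<Rightarrow> bool) \<Rightarrow> bool" where
  "K4_free E \<longleftrightarrow> \<not> (\<exists>a b c d. distinct [a, b, c, d] \<and>
      E a b \<and> E a c \<and> E a d \<and> E b c \<and> E b d \<and> E c d)"

end

theory Submission
  imports Defs
begin


lemma sym_inner:
  fixes M :: "real^'n^'n"
  assumes sym: "\<And>i j. M$i$j = M$j$i"
  shows "x \<bullet> (M *v y) = y \<bullet> (M *v x)"
proof -
  have "x \<bullet> (M *v y) = (\<Sum>i\<in>UNIV. \<Sum>j\<in>UNIV. x$i * M$i$j * y$j)"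
    by (simp add: inner_vec_def matrix_vector_mult_def sum_distrib_left mult.assoc)
  also have "\<dots> = (\<Sum>j\<in>UNIV. \<Sum>i\<in>UNIV. x$i * M$i$j * y$j)"
    by (rule sum.swap)
  also have "\<dots> = y \<bullet> (M *v x)"
    by (simp add: inner_vec_def matrix_vector_mult_def sum_distrib_left sym mult.commute mult.left_commute)
  finally show ?thesis .
qed

lemma quad_scale:
  fixes M :: "real^'n^'n"
  shows "(c *\<^sub>R x) \<bullet> (M *v (c *\<^sub>R x)) = c^2 * (x \<bullet> (M *v x))"
  by (simp add: matrix_vector_mult_scaleR power2_eq_square)

lemma min_eig:
  fixes M :: "real^'n^'n"
  assumes sym: "\<And>i j. M$i$j = M$j$i"
  shows "\<exists>l. is_eigenvalue M l \<and> (\<forall>x. l * (x \<bullet> x) \<le> x \<bullet> (M *v x))"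
proof -
  let ?g = "\<lambda>x. x \<bullet> (M *v x)"
  have c1: "compact (sphere (0::real^'n) 1)" by simp
  have c2: "sphere (0::real^'n) 1 \<noteq> {}" by simp
  have c3: "continuous_on (sphere 0 1) ?g" by (intro continuous_intros)
  obtain x0 where x0: "x0 \<in> sphere 0 1" and mn: "\<And>y. y \<in> sphere 0 1 \<Longrightarrow> ?g x0 \<le> ?g y"
    using continuous_attains_inf[OF c1 c2 c3] by auto
  define l where "l = ?g x0"
  have nx0: "norm x0 = 1" using x0 by simp
  have x0x0: "x0 \<bullet> x0 = 1" using nx0 by (simp add: dot_square_norm)
  have low: "l * (y \<bullet> y) \<le> ?g y" for y
  proof (cases "y = 0")
    case True then show ?thesis by simp
  next
    case False
    define u where "u = (1 / norm y) *\<^sub>R y"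
    have "u \<in> sphere 0 1" using False by (simp add: u_def)
    then have "l \<le> ?g u" using mn l_def by blast
    also have "?g u = (1/norm y)^2 * ?g y" unfolding u_def by (rule quad_scale)
    finally have "l \<le> (1/norm y)^2 * ?g y" .
    then have "l * (norm y)^2 \<le> ?g y" using False
      by (simp add: field_simps power2_eq_square)
    then show ?thesis by (simp add: dot_square_norm)
  qed
  define z where "z = M *v x0 - l *\<^sub>R x0"
  define h where "h = (\<lambda>y. ?g y - l * (y \<bullet> y))"
  have hpos: "0 \<le> h y" for y using low[of y] by (simp add: h_def)
  have hx0: "h x0 = 0" by (simp add: h_def l_def x0x0)
  have expand: "h (x0 + t *\<^sub>R z) = 2 * t * (z \<bullet> z) + t^2 * h z" for t
  proof -
    have s1: "x0 \<bullet> (M *v z) = z \<bullet> (M *v x0)" by (rule sym_inner[OF sym])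
    have mv: "M *v (x0 + t *\<^sub>R z) = M *v x0 + t *\<^sub>R (M *v z)"
      by (simp add: matrix_vector_right_distrib matrix_vector_mult_scaleR)
    have g1: "?g (x0 + t *\<^sub>R z) = ?g x0 + t * (x0 \<bullet> (M *v z)) + t * (z \<bullet> (M *v x0)) + t * t * ?g z"
      unfolding mv by (simp only: inner_add_left inner_add_right inner_scaleR_left inner_scaleR_right) (simp add: algebra_simps)
    have g2: "(x0 + t *\<^sub>R z) \<bullet> (x0 + t *\<^sub>R z) = x0 \<bullet> x0 + 2 * t * (z \<bullet> x0) + t * t * (z \<bullet> z)"
      by (simp only: inner_add_left inner_add_right inner_scaleR_left inner_scaleR_right inner_commute[of x0 z]) (simp add: algebra_simps)
    have zM: "z \<bullet> (M *v x0 - l *\<^sub>R x0) = z \<bullet> (M *v x0) - l * (z \<bullet> x0)"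
      by (simp add: inner_diff_right)
    have "h (x0 + t *\<^sub>R z) = h x0 + 2 * t * (z \<bullet> (M *v x0 - l *\<^sub>R x0)) + t^2 * h z"
      unfolding h_def g1 g2 zM s1 power2_eq_square by (simp add: algebra_simps)
    then show ?thesis using hx0 by (simp add: z_def)
  qed
  have "z \<bullet> z = 0"
  proof (rule ccontr)
    assume ne: "z \<bullet> z \<noteq> 0"
    define a where "a = z \<bullet> z"
    define c where "c = h z"
    have apos: "a > 0" using ne by (simp add: a_def)
    have cpos: "c \<ge> 0" using hpos by (simp add: c_def)
    define t where "t = - a / (c + 1)"
    have "0 \<le> 2 * t * a + t^2 * c" using hpos[of "x0 + t *\<^sub>R z"] expand[of t] by (simp add: a_def c_def)
    then have "0 \<le> (2 * t * a + t^2 * c) * (c+1)^2" using cpos by simp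
    also have "(2 * t * a + t^2 * c) * (c+1)^2 = -(a^2 * (c + 2))"
    proof -
      have tc: "t * (c+1) = -a" using cpos by (simp add: t_def)
      have "(2 * t * a + t^2 * c) * (c+1)^2 = 2*a*(t*(c+1))*(c+1) + c*(t*(c+1))^2"
        by (simp add: power2_eq_square algebra_simps)
      also have "\<dots> = -(a^2 * (c + 2))" unfolding tc by (simp add: power2_eq_square algebra_simps)
      finally show ?thesis .
    qed
    finally have "0 \<le> -(a^2 * (c + 2))" .
    moreover have "a^2 * (c + 2) > 0" using apos cpos by simp
    ultimately show False by linarith
  qed
  then have "z = 0" by simp
  then have ev: "M *v x0 = l *\<^sub>R x0" by (simp add: z_def)
  have "x0 \<noteq> 0" using nx0 by auto
  then have "is_eigenvalue M l" using ev by (auto simp: is_eigenvalue_def)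
  then show ?thesis using low by blast
qed

lemma eig_finite:
  fixes M :: "real^'n^'n"
  assumes sym: "\<And>i j. M$i$j = M$j$i"
  shows "finite {l. is_eigenvalue M l}"
proof -
  let ?S = "{l. is_eigenvalue M l}"
  define f where "f l = (SOME x. x \<noteq> 0 \<and> M *v x = l *\<^sub>R x)" for l
  have fS: "f l \<noteq> 0 \<and> M *v f l = l *\<^sub>R f l" if "l \<in> ?S" for l
  proof -
    have "\<exists>x. x \<noteq> 0 \<and> M *v x = l *\<^sub>R x" using that by (simp add: is_eigenvalue_def)
    then show ?thesis unfolding f_def by (rule someI_ex)
  qed
  have inj: "inj_on f ?S"
  proof (rule inj_onI)
    fix l1 l2 assume h1: "l1 \<in> ?S" and h2: "l2 \<in> ?S" and e: "f l1 = f l2"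
    have "l1 *\<^sub>R f l1 = l2 *\<^sub>R f l1" using fS[OF h1] fS[OF h2] e by metis
    then show "l1 = l2" using fS[OF h1] by (simp add: scaleR_cancel_right)
  qed
  have orth: "pairwise orthogonal (f ` ?S)"
    unfolding pairwise_def orthogonal_def
  proof (intro ballI impI)
    fix x y assume "x \<in> f ` ?S" "y \<in> f ` ?S" "x \<noteq> y"
    then obtain l1 l2 where h1: "l1 \<in> ?S" and h2: "l2 \<in> ?S" and xy: "x = f l1" "y = f l2" "f l1 \<noteq> f l2"
      by blast
    have ne: "l1 \<noteq> l2" using xy by auto
    have "l1 * (x \<bullet> y) = (M *v x) \<bullet> y" using fS[OF h1] xy by simp
    also have "\<dots> = y \<bullet> (M *v x)" by (simp add: inner_commute)
    also have "\<dots> = x \<bullet> (M *v y)" by (rule sym_inner[OF sym])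
    also have "\<dots> = l2 * (x \<bullet> y)" using fS[OF h2] xy by simp
    finally have "(l1 - l2) * (x \<bullet> y) = 0" by (simp add: algebra_simps)
    then show "x \<bullet> y = 0" using ne by simp
  qed
  have "0 \<notin> f ` ?S" using fS by auto
  then have "independent (f ` ?S)" using pairwise_orthogonal_independent orth by blast
  then have "finite (f ` ?S)" using independent_bound by blast
  then show ?thesis using inj finite_imageD by blast
qed

lemma rayleigh_min:
  fixes M :: "real^'n^'n"
  assumes sym: "\<And>i j. M$i$j = M$j$i"
  shows "Min {l. is_eigenvalue M l} * (x \<bullet> x) \<le> x \<bullet> (M *v x)"
proof -
  obtain l0 where l0: "is_eigenvalue M l0" "\<forall>x. l0 * (x \<bullet> x) \<le> x \<bullet> (M *v x)"
    using min_eig[OF sym] by blast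
  have "Min {l. is_eigenvalue M l} = l0"
  proof (rule Min_eqI)
    show "finite {l. is_eigenvalue M l}" by (rule eig_finite[OF sym])
    show "l0 \<in> {l. is_eigenvalue M l}" using l0 by simp
    fix l assume "l \<in> {l. is_eigenvalue M l}"
    then obtain v where v: "v \<noteq> 0" "M *v v = l *\<^sub>R v" by (auto simp: is_eigenvalue_def)
    have "l0 * (v \<bullet> v) \<le> v \<bullet> (M *v v)" using l0 by blast
    also have "\<dots> = l * (v \<bullet> v)" using v by simp
    finally have "l0 * (v \<bullet> v) \<le> l * (v \<bullet> v)" .
    moreover have "v \<bullet> v > 0" using v(1) by simp
    ultimately show "l0 \<le> l" by simp
  qed
  then show ?thesis using l0 by simp
qed



definition ind :: "('n \<Rightarrow> 'n \<Rightarrow> bool) \<Rightarrow> 'n \<Rightarrow> 'n \<Rightarrow> real" where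
  "ind E u v = (if E u v then 1 else 0)"

lemma Q_entry: "signless_laplacian E $ i $ j = (if i = j then real (degree E i) else 0) + ind E i j"
  by (simp add: signless_laplacian_def degree_matrix_def adj_matrix_def ind_def)

lemma deg_sum: "real (degree E i) = (\<Sum>j\<in>UNIV. ind E i j)"
  by (simp add: degree_def ind_def sum.If_cases)

context
  fixes E :: "'n::finite \<Rightarrow> 'n \<Rightarrow> bool"
  assumes sg: "simple_graph E"
begin

lemma symE: "E u v = E v u" using sg by (simp add: simple_graph_def)
lemma irrE: "\<not> E v v" using sg by (simp add: simple_graph_def)
lemma ind_sym: "ind E u v = ind E v u" by (simp add: ind_def symE)

lemma Q_sym: "signless_laplacian E $ i $ j = signless_laplacian E $ j $ i"
  by (simp add: Q_entry ind_sym)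

lemma quad_form:
  "2 * (x \<bullet> (signless_laplacian E *v x)) = (\<Sum>u\<in>UNIV. \<Sum>v\<in>UNIV. ind E u v * (x$u + x$v)^2)"
proof -
  have row: "(signless_laplacian E *v x) $ u = (\<Sum>v\<in>UNIV. ind E u v) * x$u + (\<Sum>v\<in>UNIV. ind E u v * x$v)" for u
  proof -
    have "(signless_laplacian E *v x) $ u = (\<Sum>v\<in>UNIV. (if u = v then real (degree E u) * x$v else 0) + ind E u v * x$v)"
      unfolding matrix_vector_mult_def vec_lambda_beta by (rule sum.cong) (auto simp: Q_entry algebra_simps)
    also have "\<dots> = (\<Sum>v\<in>UNIV. (if u = v then real (degree E u) * x$v else 0)) + (\<Sum>v\<in>UNIV. ind E u v * x$v)"
      by (rule sum.distrib)
    also have "\<dots> = real (degree E u) * x$u + (\<Sum>v\<in>UNIV. ind E u v * x$v)"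
      by (simp add: sum.delta)
    finally have "(signless_laplacian E *v x) $ u = real (degree E u) * x$u + (\<Sum>v\<in>UNIV. ind E u v * x$v)" .
    then show ?thesis by (simp add: deg_sum)
  qed
  have L: "x \<bullet> (signless_laplacian E *v x) = (\<Sum>u\<in>UNIV. \<Sum>v\<in>UNIV. ind E u v * (x$u^2 + x$u * x$v))"
    by (simp add: inner_vec_def row sum_distrib_left sum_distrib_right sum.distrib algebra_simps power2_eq_square)
  have sw: "(\<Sum>u\<in>UNIV. \<Sum>v\<in>UNIV. ind E u v * x$v^2) = (\<Sum>u\<in>UNIV. \<Sum>v\<in>UNIV. ind E u v * x$u^2)"
    by (subst sum.swap) (simp add: ind_sym)
  have "(\<Sum>u\<in>UNIV. \<Sum>v\<in>UNIV. ind E u v * (x$u + x$v)^2)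
      = (\<Sum>u\<in>UNIV. \<Sum>v\<in>UNIV. ind E u v * x$u^2) + 2 * (\<Sum>u\<in>UNIV. \<Sum>v\<in>UNIV. ind E u v * (x$u * x$v))
        + (\<Sum>u\<in>UNIV. \<Sum>v\<in>UNIV. ind E u v * x$v^2)"
    by (simp add: power2_eq_square algebra_simps sum.distrib sum_distrib_left)
  also have "\<dots> = 2 * (\<Sum>u\<in>UNIV. \<Sum>v\<in>UNIV. ind E u v * (x$u^2 + x$u * x$v))"
    unfolding sw by (simp add: algebra_simps sum.distrib sum_distrib_left)
  finally show ?thesis using L by simp
qed

lemma rayleigh_graph:
  "2 * q_min E * (x \<bullet> x) \<le> (\<Sum>u\<in>UNIV. \<Sum>v\<in>UNIV. ind E u v * (x$u + x$v)^2)"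
proof -
  have "q_min E * (x \<bullet> x) \<le> x \<bullet> (signless_laplacian E *v x)"
    unfolding q_min_def by (rule rayleigh_min) (rule Q_sym)
  then show ?thesis using quad_form[of x] by simp
qed

end



definition deg :: "('n::finite \<Rightarrow> 'n \<Rightarrow> bool) \<Rightarrow> 'n \<Rightarrow> real" where
  "deg E u = (\<Sum>v\<in>UNIV. ind E u v)"
definition M2 :: "('n::finite \<Rightarrow> 'n \<Rightarrow> bool) \<Rightarrow> real" where
  "M2 E = (\<Sum>u\<in>UNIV. deg E u)"
definition SS :: "('n::finite \<Rightarrow> 'n \<Rightarrow> bool) \<Rightarrow> 'n \<Rightarrow> real" where
  "SS E w = (\<Sum>u\<in>UNIV. ind E w u * deg E u)"
definition cc :: "('n::finite \<Rightarrow> 'n \<Rightarrow> bool) \<Rightarrow> 'n \<Rightarrow> 'n \<Rightarrow> real" where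
  "cc E w u = (\<Sum>y\<in>UNIV. ind E w y * ind E y u)"
definition TT :: "('n::finite \<Rightarrow> 'n \<Rightarrow> bool) \<Rightarrow> 'n \<Rightarrow> real" where
  "TT E w = (\<Sum>u\<in>UNIV. ind E w u * cc E w u)"
definition XX :: "('n::finite \<Rightarrow> 'n \<Rightarrow> bool) \<Rightarrow> 'n \<Rightarrow> real" where
  "XX E w = (\<Sum>u\<in>UNIV. ind E w u * (cc E w u)^2)"
definition RR :: "('n::finite \<Rightarrow> 'n \<Rightarrow> bool) \<Rightarrow> 'n \<Rightarrow> real" where
  "RR E w = (\<Sum>u\<in>UNIV. \<Sum>v\<in>UNIV. ind E u v * (1 - ind E w u) * (1 - ind E w v))"
definition HH :: "('n::finite \<Rightarrow> 'n \<Rightarrow> bool) \<Rightarrow> 'n \<Rightarrow> 'n \<Rightarrow> real" where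
  "HH E w y = (\<Sum>u\<in>UNIV. \<Sum>v\<in>UNIV. ind E u v * ind E w u * ind E w v * (1 - ind E y u) * (1 - ind E y v))"

context
  fixes E :: "'n::finite \<Rightarrow> 'n \<Rightarrow> bool"
  assumes sg: "simple_graph E" and k4: "K4_free E"
begin

lemma k4': "E w y \<Longrightarrow> E w u \<Longrightarrow> E w v \<Longrightarrow> E y u \<Longrightarrow> E y v \<Longrightarrow> E u v \<Longrightarrow> False"
proof -
  assume h: "E w y" "E w u" "E w v" "E y u" "E y v" "E u v"
  have irr: "\<And>a. \<not> E a a" using irrE[OF sg] .
  have "distinct [w, y, u, v]" using h irr by auto
  then show False using k4 h unfolding K4_free_def by blast
qed

lemma M2_sum: "M2 E = (\<Sum>u\<in>UNIV. \<Sum>v\<in>UNIV. ind E u v)"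
  by (simp add: M2_def deg_def)

lemma lemA:
  assumes wy: "E w y"
  shows "real CARD('n) * q_min E \<le> M2 E / 2 + 3/2 * (RR E w + HH E w y)"
proof -
  define p :: "real^'n" where "p = (\<chi> v. if E w v then -1 else 2)"
  define r :: "real^'n" where "r = (\<chi> v. if E w v then (if E y v then -1 else 1) else 0)"
  have "p \<bullet> p + 3 * (r \<bullet> r) = (\<Sum>v\<in>UNIV. p$v * p$v + 3 * (r$v * r$v))"
    by (simp add: inner_vec_def sum.distrib sum_distrib_left)
  also have "\<dots> = (\<Sum>v\<in>(UNIV::'n set). 4)"
    by (rule sum.cong) (auto simp: p_def r_def)
  finally have pp: "p \<bullet> p + 3 * (r \<bullet> r) = 4 * real CARD('n)" by simp
  have pair: "ind E u v * ((p$u + p$v)^2 + 3*(r$u + r$v)^2) = 4 * ind E u v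
     + 12 * (ind E u v * (1 - ind E w u) * (1 - ind E w v))
     + 12 * (ind E u v * ind E w u * ind E w v * (1 - ind E y u) * (1 - ind E y v))" for u v
    using k4'[OF wy, of u v]
    by (cases "E u v"; cases "E w u"; cases "E w v"; cases "E y u"; cases "E y v") (simp_all add: ind_def p_def r_def)
  have QF: "(\<Sum>u\<in>UNIV. \<Sum>v\<in>UNIV. ind E u v * (p$u + p$v)^2) + 3 * (\<Sum>u\<in>UNIV. \<Sum>v\<in>UNIV. ind E u v * (r$u + r$v)^2)
      = 4 * M2 E + 12 * RR E w + 12 * HH E w y"
  proof -
    have "(\<Sum>u\<in>UNIV. \<Sum>v\<in>UNIV. ind E u v * (p$u + p$v)^2) + 3 * (\<Sum>u\<in>UNIV. \<Sum>v\<in>UNIV. ind E u v * (r$u + r$v)^2)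
       = (\<Sum>u\<in>UNIV. \<Sum>v\<in>UNIV. ind E u v * ((p$u + p$v)^2 + 3*(r$u + r$v)^2))"
      by (simp add: sum.distrib sum_distrib_left algebra_simps)
    also have "\<dots> = (\<Sum>u\<in>UNIV. \<Sum>v\<in>UNIV. 4 * ind E u v
     + 12 * (ind E u v * (1 - ind E w u) * (1 - ind E w v))
     + 12 * (ind E u v * ind E w u * ind E w v * (1 - ind E y u) * (1 - ind E y v)))"
      by (simp only: pair)
    also have "\<dots> = 4 * M2 E + 12 * RR E w + 12 * HH E w y"
      by (simp add: M2_sum RR_def HH_def sum.distrib sum_distrib_left)
    finally show ?thesis .
  qed
  have r1: "2 * q_min E * (p \<bullet> p) \<le> (\<Sum>u\<in>UNIV. \<Sum>v\<in>UNIV. ind E u v * (p$u + p$v)^2)"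
    by (rule rayleigh_graph[OF sg])
  have r2: "2 * q_min E * (r \<bullet> r) \<le> (\<Sum>u\<in>UNIV. \<Sum>v\<in>UNIV. ind E u v * (r$u + r$v)^2)"
    by (rule rayleigh_graph[OF sg])
  have "2 * q_min E * (p \<bullet> p + 3 * (r \<bullet> r)) \<le> 4 * M2 E + 12 * RR E w + 12 * HH E w y"
    using r1 r2 QF by (simp add: algebra_simps)
  then have "8 * real CARD('n) * q_min E \<le> 4 * M2 E + 12 * RR E w + 12 * HH E w y"
    unfolding pp by (simp add: algebra_simps)
  then show ?thesis by (simp add: algebra_simps)
qed

lemma ind_sq: "ind E u v * ind E u v = ind E u v" by (simp add: ind_def)
lemma ind_nonneg: "0 \<le> ind E u v" by (simp add: ind_def)

lemma cc_alt: "(\<Sum>v\<in>UNIV. ind E u v * ind E w v) = cc E w u"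
  unfolding cc_def by (rule sum.cong) (auto simp: ind_sym[OF sg, of u] mult.commute)

lemma deg_alt: "(\<Sum>u\<in>UNIV. ind E u v) = deg E v"
  unfolding deg_def by (rule sum.cong) (auto simp: ind_sym[OF sg])

lemma helper_u: "(\<Sum>u\<in>UNIV. \<Sum>v\<in>UNIV. ind E u v * ind E w u * ind E w v * g u) = (\<Sum>u\<in>UNIV. ind E w u * cc E w u * g u)"
proof (rule sum.cong)
  fix u
  have "(\<Sum>v\<in>UNIV. ind E u v * ind E w u * ind E w v * g u) = (\<Sum>v\<in>UNIV. (ind E w u * g u) * (ind E u v * ind E w v))"
    by (intro sum.cong refl) (simp only: mult_ac)
  also have "\<dots> = (ind E w u * g u) * (\<Sum>v\<in>UNIV. ind E u v * ind E w v)"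
    by (rule sum_distrib_left[symmetric])
  also have "\<dots> = ind E w u * cc E w u * g u"
    by (simp only: cc_alt mult_ac)
  finally show "(\<Sum>v\<in>UNIV. ind E u v * ind E w u * ind E w v * g u) = ind E w u * cc E w u * g u" .
qed simp

lemma helper_v: "(\<Sum>u\<in>UNIV. \<Sum>v\<in>UNIV. ind E u v * ind E w u * ind E w v * g v) = (\<Sum>u\<in>UNIV. ind E w u * cc E w u * g u)"
proof -
  have pw: "ind E u v * ind E w u * ind E w v * g v = ind E v u * ind E w v * ind E w u * g v" for u v
    by (simp only: ind_sym[OF sg, of u v] mult_ac)
  have "(\<Sum>u\<in>UNIV. \<Sum>v\<in>UNIV. ind E u v * ind E w u * ind E w v * g v) = (\<Sum>v\<in>UNIV. \<Sum>u\<in>UNIV. ind E v u * ind E w v * ind E w u * g v)"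
    by (subst sum.swap) (simp only: pw)
  also have "\<dots> = (\<Sum>u\<in>UNIV. ind E w u * cc E w u * g u)" by (rule helper_u)
  finally show ?thesis .
qed

lemma lemB: "(\<Sum>y\<in>UNIV. ind E w y * HH E w y) = deg E w * TT E w - 2 * XX E w"
proof -
  let ?K = "\<lambda>u v. ind E u v * ind E w u * ind E w v"
  have pt: "ind E w y * (ind E u v * ind E w u * ind E w v * (1 - ind E y u) * (1 - ind E y v))
      = ?K u v * (ind E w y - ind E w y * ind E y u - ind E w y * ind E y v)" for y u v
  proof -
    have z: "ind E u v * ind E w u * ind E w v * ind E w y * ind E y u * ind E y v = 0"
      using k4'[of w y u v] by (auto simp: ind_def)
    show ?thesis using z by (cases "E w y"; cases "E y u"; cases "E y v") (simp_all add: ind_def)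
  qed
  have "(\<Sum>y\<in>UNIV. ind E w y * HH E w y)
      = (\<Sum>y\<in>UNIV. \<Sum>u\<in>UNIV. \<Sum>v\<in>UNIV. ind E w y * (ind E u v * ind E w u * ind E w v * (1 - ind E y u) * (1 - ind E y v)))"
    by (simp add: HH_def sum_distrib_left)
  also have "\<dots> = (\<Sum>u\<in>UNIV. \<Sum>y\<in>UNIV. \<Sum>v\<in>UNIV. ind E w y * (ind E u v * ind E w u * ind E w v * (1 - ind E y u) * (1 - ind E y v)))"
    by (rule sum.swap)
  also have "\<dots> = (\<Sum>u\<in>UNIV. \<Sum>v\<in>UNIV. \<Sum>y\<in>UNIV. ind E w y * (ind E u v * ind E w u * ind E w v * (1 - ind E y u) * (1 - ind E y v)))"
    by (rule sum.cong[OF refl], rule sum.swap)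
  also have "\<dots> = (\<Sum>u\<in>UNIV. \<Sum>v\<in>UNIV. \<Sum>y\<in>UNIV. ?K u v * (ind E w y - ind E w y * ind E y u - ind E w y * ind E y v))"
    by (simp only: pt)
  also have "\<dots> = (\<Sum>u\<in>UNIV. \<Sum>v\<in>UNIV. ?K u v * (deg E w - cc E w u - cc E w v))"
    by (simp add: sum_distrib_left[symmetric] sum_subtractf deg_def cc_def)
  also have "\<dots> = deg E w * (\<Sum>u\<in>UNIV. \<Sum>v\<in>UNIV. ?K u v * 1) - (\<Sum>u\<in>UNIV. \<Sum>v\<in>UNIV. ?K u v * cc E w u)
        - (\<Sum>u\<in>UNIV. \<Sum>v\<in>UNIV. ?K u v * cc E w v)"
    by (simp add: algebra_simps sum_subtractf sum_distrib_left sum.distrib)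
  also have "\<dots> = deg E w * TT E w - 2 * XX E w"
    using helper_u[where g="\<lambda>_. 1" and w=w] helper_u[where g="cc E w" and w=w] helper_v[where g="cc E w" and w=w]
    by (simp add: TT_def XX_def power2_eq_square mult.assoc)
  finally show ?thesis .
qed

lemma lemC: "RR E w = M2 E - 2 * SS E w + TT E w"
proof -
  have "RR E w = (\<Sum>u\<in>UNIV. \<Sum>v\<in>UNIV. ind E u v - ind E u v * ind E w u - ind E u v * ind E w v + ind E u v * ind E w u * ind E w v * 1)"
    unfolding RR_def by (intro sum.cong refl) (simp add: algebra_simps)
  also have "\<dots> = (\<Sum>u\<in>UNIV. \<Sum>v\<in>UNIV. ind E u v) - (\<Sum>u\<in>UNIV. \<Sum>v\<in>UNIV. ind E u v * ind E w u)
     - (\<Sum>u\<in>UNIV. \<Sum>v\<in>UNIV. ind E u v * ind E w v) + (\<Sum>u\<in>UNIV. \<Sum>v\<in>UNIV. ind E u v * ind E w u * ind E w v * 1)"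
    by (simp only: sum.distrib sum_subtractf)
  finally have "RR E w = (\<Sum>u\<in>UNIV. \<Sum>v\<in>UNIV. ind E u v) - (\<Sum>u\<in>UNIV. \<Sum>v\<in>UNIV. ind E u v * ind E w u)
     - (\<Sum>u\<in>UNIV. \<Sum>v\<in>UNIV. ind E u v * ind E w v) + (\<Sum>u\<in>UNIV. \<Sum>v\<in>UNIV. ind E u v * ind E w u * ind E w v * 1)" .
  moreover have "(\<Sum>u\<in>UNIV. \<Sum>v\<in>UNIV. ind E u v * ind E w u) = SS E w"
    by (simp add: SS_def deg_def sum_distrib_left mult.commute)
  moreover have "(\<Sum>u\<in>UNIV. \<Sum>v\<in>UNIV. ind E u v * ind E w v) = SS E w"
  proof -
    have "(\<Sum>u\<in>UNIV. \<Sum>v\<in>UNIV. ind E u v * ind E w v) = (\<Sum>v\<in>UNIV. ind E w v * (\<Sum>u\<in>UNIV. ind E u v))"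
      by (subst sum.swap) (simp add: sum_distrib_left mult.commute)
    then show ?thesis by (simp add: deg_alt SS_def)
  qed
  moreover have "(\<Sum>u\<in>UNIV. \<Sum>v\<in>UNIV. ind E u v * ind E w u * ind E w v * 1) = TT E w"
    using helper_u[where g="\<lambda>_. 1" and w=w] by (simp add: TT_def)
  ultimately show ?thesis by (simp add: M2_sum)
qed

lemma lemD: "(TT E w)^2 \<le> deg E w * XX E w"
proof -
  have "(\<Sum>u\<in>UNIV. ind E w u * (ind E w u * cc E w u))^2
      \<le> (\<Sum>u\<in>UNIV. (ind E w u)^2) * (\<Sum>u\<in>UNIV. (ind E w u * cc E w u)^2)"
    by (rule Cauchy_Schwarz_ineq_sum)
  moreover have "(\<Sum>u\<in>UNIV. ind E w u * (ind E w u * cc E w u)) = TT E w"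
    unfolding TT_def by (intro sum.cong refl) (simp add: ind_def)
  moreover have "(\<Sum>u\<in>UNIV. (ind E w u)^2) = deg E w"
    unfolding deg_def by (intro sum.cong refl) (simp add: ind_def)
  moreover have "(\<Sum>u\<in>UNIV. (ind E w u * cc E w u)^2) = XX E w"
    unfolding XX_def by (intro sum.cong refl) (simp add: ind_def power2_eq_square)
  ultimately show ?thesis by simp
qed

lemma lemE: "(\<Sum>w\<in>UNIV. SS E w) = (\<Sum>u\<in>UNIV. (deg E u)^2)"
proof -
  have "(\<Sum>w\<in>UNIV. SS E w) = (\<Sum>u\<in>UNIV. deg E u * (\<Sum>w\<in>UNIV. ind E w u))"
    unfolding SS_def by (subst sum.swap) (simp add: sum_distrib_left mult.commute)
  then show ?thesis by (simp add: deg_alt power2_eq_square)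
qed

lemma lemF: "(M2 E)^2 \<le> real CARD('n) * (\<Sum>u\<in>UNIV. (deg E u)^2)"
proof -
  have "(\<Sum>u\<in>UNIV. 1 * deg E u)^2 \<le> (\<Sum>u\<in>(UNIV::'n set). 1^2) * (\<Sum>u\<in>UNIV. (deg E u)^2)"
    by (rule Cauchy_Schwarz_ineq_sum)
  then show ?thesis by (simp add: M2_def)
qed

end



context
  fixes E :: "'n::finite \<Rightarrow> 'n \<Rightarrow> bool"
  assumes sg: "simple_graph E" and k4: "K4_free E"
begin

lemma per_w:
  assumes dpos: "deg E w > 0"
  shows "real CARD('n) * q_min E \<le> 2 * M2 E - 3 * SS E w + 3/4 * (deg E w)^2"
proof -
  define N where "N = real CARD('n)"
  define q where "q = q_min E"
  define d where "d = deg E w"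
  define T where "T = TT E w"
  define X where "X = XX E w"
  have "(\<Sum>y\<in>UNIV. ind E w y * (N * q)) \<le> (\<Sum>y\<in>UNIV. ind E w y * (M2 E / 2 + 3/2 * (RR E w + HH E w y)))"
  proof (rule sum_mono)
    fix y show "ind E w y * (N * q) \<le> ind E w y * (M2 E / 2 + 3/2 * (RR E w + HH E w y))"
    proof (cases "E w y")
      case True then show ?thesis using lemA[OF sg k4 True] by (simp add: ind_def N_def q_def)
    next
      case False then show ?thesis by (simp add: ind_def)
    qed
  qed
  moreover have "(\<Sum>y\<in>UNIV. ind E w y * (N * q)) = d * (N * q)"
    by (simp add: d_def deg_def sum_distrib_right)
  moreover have "(\<Sum>y\<in>UNIV. ind E w y * (M2 E / 2 + 3/2 * (RR E w + HH E w y)))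
      = d * (M2 E / 2 + 3/2 * RR E w) + 3/2 * (\<Sum>y\<in>UNIV. ind E w y * HH E w y)"
    by (simp add: d_def deg_def sum.distrib sum_distrib_left sum_distrib_right sum_divide_distrib algebra_simps)
  ultimately have A: "d * (N * q) \<le> d * (M2 E / 2 + 3/2 * RR E w) + 3/2 * (d * T - 2 * X)"
    using lemB[OF sg k4, of w] by (simp add: d_def T_def X_def)
  have RRe: "RR E w = M2 E - 2 * SS E w + T" using lemC[OF sg k4, of w] by (simp add: T_def)
  have eq: "d * (M2 E / 2 + 3/2 * (M2 E - 2 * SS E w + T)) + 3/2 * (d * T - 2 * X)
     = d * (2 * M2 E - 3 * SS E w) + (3 * d * T - 3 * X)"
    by (simp add: field_simps)
  have A2: "d * (N * q) \<le> d * (2 * M2 E - 3 * SS E w) + (3 * d * T - 3 * X)"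
    using A unfolding RRe eq .
  have D: "T^2 \<le> d * X" using lemD[OF sg k4, of w] by (simp add: T_def d_def X_def)
  have dp: "d > 0" using dpos by (simp add: d_def)
  have key0: "d * (3 * d * T - 3 * X) \<le> 3/4 * d^4"
  proof -
    have "d * (3 * d * T - 3 * X) = 3 * d^2 * T - 3 * (d * X)" by (simp add: algebra_simps power2_eq_square)
    also have "\<dots> \<le> 3 * d^2 * T - 3 * T^2" using D by simp
    also have "\<dots> = 3/4 * d^4 - 3 * (T - d^2/2)^2" by (simp add: algebra_simps power2_eq_square power4_eq_xxxx)
    also have "\<dots> \<le> 3/4 * d^4" by simp
    finally show ?thesis .
  qed
  have key: "3 * d * T - 3 * X \<le> 3/4 * d^3"
  proof -
    have "d * (3 * d * T - 3 * X) \<le> d * (3/4 * d^3)" using key0 by (simp add: power4_eq_xxxx power3_eq_cube algebra_simps)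
    then show ?thesis using dp by (simp add: mult_le_cancel_left_pos)
  qed
  have "d * (N * q) \<le> d * (2 * M2 E - 3 * SS E w + 3/4 * d^2)"
    using A2 key by (simp add: algebra_simps power2_eq_square power3_eq_cube)
  then have "N * q \<le> 2 * M2 E - 3 * SS E w + 3/4 * d^2" using dp by (simp add: mult_le_cancel_left_pos)
  then show ?thesis by (simp add: N_def q_def d_def)
qed

end

theorem mainTheorem8:
  fixes E :: "'n::finite \<Rightarrow> 'n \<Rightarrow> bool"
  assumes "simple_graph E" and "K4_free E"
  shows "q_min E \<le> 4 * real CARD('n) / 9"
proof -
  note sg = assms(1) and k4 = assms(2)
  define N where "N = real CARD('n)"
  define q where "q = q_min E"
  have Npos: "N > 0" by (simp add: N_def)
  show ?thesis
  proof (cases "\<exists>w. \<forall>v. \<not> E w v")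
    case True
    then obtain w where w: "\<And>v. \<not> E w v" by blast
    define x :: "real^'n" where "x = axis w 1"
    have r: "2 * q_min E * (x \<bullet> x) \<le> (\<Sum>u\<in>UNIV. \<Sum>v\<in>UNIV. ind E u v * (x$u + x$v)^2)"
      by (rule rayleigh_graph[OF sg])
    have xx: "x \<bullet> x = 1" by (simp add: x_def)
    have z: "ind E u v * (x$u + x$v)^2 = 0" for u v
    proof (cases "u = w")
      case True then show ?thesis using w by (simp add: ind_def)
    next
      case False
      show ?thesis
      proof (cases "v = w")
        case True then have "\<not> E u v" using w symE[OF sg] by blast
        then show ?thesis by (simp add: ind_def)
      next
        case False then show ?thesis using \<open>u \<noteq> w\<close> by (simp add: x_def axis_def)
      qed
    qed
    have "q_min E \<le> 0" using r xx by (simp add: z)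
    then show ?thesis by simp
  next
    case False
    then have nb: "\<And>w. \<exists>v. E w v" by blast
    have dpos: "deg E w > 0" for w
    proof -
      obtain v where "E w v" using nb by blast
      then have "ind E w v \<le> deg E w" unfolding deg_def
        by (intro member_le_sum) (auto simp: ind_def)
      then show ?thesis using \<open>E w v\<close> by (simp add: ind_def)
    qed
    have "(\<Sum>w\<in>(UNIV::'n set). N * q) \<le> (\<Sum>w\<in>UNIV. 2 * M2 E - 3 * SS E w + 3/4 * (deg E w)^2)"
    proof (rule sum_mono)
      fix w :: 'n
      show "N * q \<le> 2 * M2 E - 3 * SS E w + 3/4 * (deg E w)^2"
        using per_w[OF sg k4 dpos[of w]] by (simp add: N_def q_def)
    qed
    also have "\<dots> = N * (2 * M2 E) - 3 * (\<Sum>w\<in>UNIV. SS E w) + 3/4 * (\<Sum>w\<in>UNIV. (deg E w)^2)"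
      by (simp add: N_def sum.distrib sum_subtractf sum_distrib_left)
    also have "\<dots> = N * (2 * M2 E) - 9/4 * (\<Sum>w\<in>UNIV. (deg E w)^2)"
      using lemE[OF sg k4] by simp
    finally have S1: "N * (N * q) \<le> N * (2 * M2 E) - 9/4 * (\<Sum>w\<in>UNIV. (deg E w)^2)"
      by (simp add: N_def)
    have F: "(M2 E)^2 \<le> N * (\<Sum>w\<in>UNIV. (deg E w)^2)" using lemF[OF sg k4] by (simp add: N_def)
    define D where "D = (\<Sum>w\<in>UNIV. (deg E w)^2)"
    define m where "m = M2 E"
    have S2: "N * (N * (N * q)) \<le> N * (N * (2 * m)) - 9/4 * (N * D)"
      using mult_left_mono[OF S1[folded D_def m_def], of N] Npos by (simp add: algebra_simps)
    also have "\<dots> \<le> N * (N * (2 * m)) - 9/4 * m^2" using F by (simp add: D_def m_def)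
    also have "\<dots> = 4/9 * N^4 - (2/3 * N^2 - 3/2 * m)^2" by (simp add: algebra_simps power2_eq_square power4_eq_xxxx)
    also have "\<dots> \<le> 4/9 * N^4" by simp
    finally have "N^3 * q \<le> N^3 * (4 * N / 9)" by (simp add: power3_eq_cube power4_eq_xxxx algebra_simps)
    then have "q \<le> 4 * N / 9" using Npos by (simp add: mult_le_cancel_left_pos)
    then show ?thesis by (simp add: N_def q_def)
  qed
qed


end
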